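(* A Heyting algebra $\boldsymbol{A}$ validates a Sahlqvist quasiequation $\Phi$ if and only if it validates every formula in $\mathsf{A}(\Phi)$.
   Context: Formulas over variables with $\land,\lor,\to,\lnot,0,1$; a formula $\varphi$ is valid in a Heyting algebra if it satisfies $\varphi\approx1$. A variable occurrence is positive (negative) if the number of negations and implication antecedents in whose scope it lies is even (odd); positive/negative formulas have all occurrences so. Sahlqvist antecedent: built from variables, negative formulas, $0,1$ by $\land,\lor$. Sahlqvist implication: positive formula, or $\lnot\varphi$ with $\varphi$ a Sahlqvist antecedent, or $\varphi\to\psi$ with $\varphi$ a Sahlqvist antecedent and $\psi$ positive. A Sahlqvist quasiequation is $\Phi=\varphi_1\land y\le z\,\&\cdots\&\,\varphi_m\land y\le z\Longrightarrow y\le z$ (universally quantified), $y,z$ distinct variables not in the $\varphi_i$, each $\varphi_i$ built from Sahlqvist implications by $\land,\lor$, $a\le b$ meaning $a\land b\approx a$. For each formula $\varphi(x_1..x_n)$ and $k\ge1$, $\boldsymbol{\varphi}^k$ is the finite set of formulas: $\boldsymbol{x_m}^k=\{x_m^1..x_m^k\}$; $\boldsymbol{1}^k=\{x_1^1\to x_1^1\}$; $\boldsymbol{0}^k=\{x_1^1,x_1^1\to0\}$; $(\boldsymbol{\psi\land\chi})^k=\boldsymbol{\psi}^k\cup\boldsymbol{\chi}^k$; with $\boldsymbol{\psi}^k=\{\psi_1..\psi_p\}$, $\boldsymbol{\chi}^k=\{\chi_1..\chi_t\}$: $(\boldsymbol{\lnot\psi})^k=\{\psi_1\to(\cdots(\psi_p\to0)\cdots)\}$,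 $(\boldsymbol{\psi\to\chi})^k=\{\psi_1\to(\cdots(\psi_p\to\chi_j)\cdots):j\le t\}$, $(\boldsymbol{\psi\lor\chi})^k=\{\psi_i\lor\chi_j:i\le p,j\le t\}$. For finite $\Gamma=\{\gamma_1..\gamma_n\}$, $\Gamma\to\varphi$ denotes $\{\gamma_1\to(\cdots(\gamma_n\to\varphi)\cdots)\}$. $\mathsf{A}(\Phi)=\bigcup_{k\ge1}\big(((\boldsymbol{\varphi_1}^k\to y)\cup\cdots\cup(\boldsymbol{\varphi_m}^k\to y))\to y\big)$, $y$ a variable not occurring in the $\boldsymbol{\varphi_i}^k$. *)

theory Defs
  imports Main
begin

class heyting_algebra = bounded_lattice +
  fixes himp :: "'a \<Rightarrow> 'a \<Rightarrow> 'a"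
  assumes himp_residuation: "inf x y \<le> z \<longleftrightarrow> x \<le> himp y z"

datatype 'v form =
    Var 'v
  | FAnd "'v form" "'v form"
  | FOr "'v form" "'v form"
  | FImp "'v form" "'v form"
  | FNot "'v form"
  | FBot
  | FTop

primrec eval :: "('v \<Rightarrow> 'a::heyting_algebra) \<Rightarrow> 'v form \<Rightarrow> 'a" where
  "eval v (Var x) = v x"
| "eval v (FAnd a b) = inf (eval v a) (eval v b)"
| "eval v (FOr a b) = sup (eval v a) (eval v b)"
| "eval v (FImp a b) = himp (eval v a) (eval v b)"
| "eval v (FNot a) = himp (eval v a) bot"
| "eval v FBot = bot"
| "eval v FTop = top"

definition valid_in :: "'a::heyting_algebra itself \<Rightarrow> 'v form \<Rightarrow> bool" where
  "valid_in TYPE('a) \<phi> \<longleftrightarrow> (\<forall>v :: 'v \<Rightarrow> 'a. eval v \<phi> = top)"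

text \<open>occs p \<phi>: variables having an occurrence in \<phi> of polarity p
  (True = positive, i.e. in the scope of an even number of negations and
  implication antecedents; False = negative).\<close>
primrec occs :: "bool \<Rightarrow> 'v form \<Rightarrow> 'v set" where
  "occs p (Var x) = (if p then {x} else {})"
| "occs p (FAnd a b) = occs p a \<union> occs p b"
| "occs p (FOr a b) = occs p a \<union> occs p b"
| "occs p (FImp a b) = occs (\<not> p) a \<union> occs p b"
| "occs p (FNot a) = occs (\<not> p) a"
| "occs p FBot = {}"
| "occs p FTop = {}"

definition positive_form :: "'v form \<Rightarrow> bool" where
  "positive_form \<phi> \<longleftrightarrow> occs False \<phi> = {}"

definition negative_form :: "'v form \<Rightarrow> bool" where
  "negative_form \<phi> \<longleftrightarrow> occs True \<phi> = {}"

primrec vars :: "'v form \<Rightarrow> 'v set" where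
  "vars (Var x) = {x}"
| "vars (FAnd a b) = vars a \<union> vars b"
| "vars (FOr a b) = vars a \<union> vars b"
| "vars (FImp a b) = vars a \<union> vars b"
| "vars (FNot a) = vars a"
| "vars FBot = {}"
| "vars FTop = {}"

inductive sahlqvist_antecedent :: "'v form \<Rightarrow> bool" where
  sa_var: "sahlqvist_antecedent (Var x)"
| sa_neg: "negative_form \<phi> \<Longrightarrow> sahlqvist_antecedent \<phi>"
| sa_bot: "sahlqvist_antecedent FBot"
| sa_top: "sahlqvist_antecedent FTop"
| sa_and: "sahlqvist_antecedent a \<Longrightarrow> sahlqvist_antecedent b \<Longrightarrow> sahlqvist_antecedent (FAnd a b)"
| sa_or: "sahlqvist_antecedent a \<Longrightarrow> sahlqvist_antecedent b \<Longrightarrow> sahlqvist_antecedent (FOr a b)"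

inductive sahlqvist_implication :: "'v form \<Rightarrow> bool" where
  si_pos: "positive_form \<phi> \<Longrightarrow> sahlqvist_implication \<phi>"
| si_not: "sahlqvist_antecedent \<phi> \<Longrightarrow> sahlqvist_implication (FNot \<phi>)"
| si_imp: "sahlqvist_antecedent \<phi> \<Longrightarrow> positive_form \<psi> \<Longrightarrow> sahlqvist_implication (FImp \<phi> \<psi>)"

inductive sahlqvist_premise :: "'v form \<Rightarrow> bool" where
  sp_base: "sahlqvist_implication \<phi> \<Longrightarrow> sahlqvist_premise \<phi>"
| sp_and: "sahlqvist_premise a \<Longrightarrow> sahlqvist_premise b \<Longrightarrow> sahlqvist_premise (FAnd a b)"
| sp_or: "sahlqvist_premise a \<Longrightarrow> sahlqvist_premise b \<Longrightarrow> sahlqvist_premise (FOr a b)"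

text \<open>The quasiequation
  \<phi>_1 \<and> y \<le> z & ... & \<phi>_m \<and> y \<le> z \<Longrightarrow> y \<le> z
  is represented by the list [\<phi>_1,...,\<phi>_m] together with the variables y, z.\<close>
definition sahlqvist_quasiequation :: "nat form list \<Rightarrow> nat \<Rightarrow> nat \<Rightarrow> bool" where
  "sahlqvist_quasiequation \<phi>s y z \<longleftrightarrow>
     \<phi>s \<noteq> [] \<and> y \<noteq> z \<and>
     (\<forall>\<phi>\<in>set \<phi>s. sahlqvist_premise \<phi> \<and> y \<notin> vars \<phi> \<and> z \<notin> vars \<phi>)"

definition quasi_valid_in :: "'a::heyting_algebra itself \<Rightarrow> nat form list \<Rightarrow> nat \<Rightarrow> nat \<Rightarrow> bool" where
  "quasi_valid_in TYPE('a) \<phi>s y z \<longleftrightarrow>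
     (\<forall>v :: nat \<Rightarrow> 'a.
        (\<forall>\<phi>\<in>set \<phi>s. inf (eval v \<phi>) (v y) \<le> v z) \<longrightarrow> v y \<le> v z)"

definition imps :: "'v form list \<Rightarrow> 'v form \<Rightarrow> 'v form" where
  "imps \<Gamma> \<phi> = foldr FImp \<Gamma> \<phi>"

text \<open>Variable x_m^j is represented as Var (m, j).\<close>
primrec bold :: "nat \<Rightarrow> nat form \<Rightarrow> (nat \<times> nat) form list" where
  "bold k (Var m) = map (\<lambda>j. Var (m, j)) [1..<Suc k]"
| "bold k FTop = [FImp (Var (1,1)) (Var (1,1))]"
| "bold k FBot = [Var (1,1), FImp (Var (1,1)) FBot]"
| "bold k (FAnd a b) = bold k a @ bold k b"
| "bold k (FNot a) = [imps (bold k a) FBot]"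
| "bold k (FImp a b) = map (\<lambda>c. imps (bold k a) c) (bold k b)"
| "bold k (FOr a b) = [FOr c d. c \<leftarrow> bold k a, d \<leftarrow> bold k b]"

text \<open>A(\<Phi>); the variables x_m^j become Some (m,j), the fresh variable y is None.\<close>
definition A_set :: "nat form list \<Rightarrow> (nat \<times> nat) option form set" where
  "A_set \<phi>s = (\<Union>k\<in>{1..}.
     {imps (map (\<lambda>\<phi>. imps (map (map_form Some) (bold k \<phi>)) (Var None)) \<phi>s) (Var None)})"

end

theory Submission
  imports Defs
begin

context heyting_algebra
begin

lemma inf_sup_distrib_h: "inf x (sup y z) = sup (inf x y) (inf x z)"
proof (rule order.antisym)
  have "y \<le> himp x (sup (inf x y) (inf x z))"
    using himp_residuation[of y x "sup (inf x y) (inf x z)"] by (simp add: inf_commute)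
  moreover have "z \<le> himp x (sup (inf x y) (inf x z))"
    using himp_residuation[of z x "sup (inf x y) (inf x z)"] by (simp add: inf_commute)
  ultimately have "sup y z \<le> himp x (sup (inf x y) (inf x z))" by simp
  then show "inf x (sup y z) \<le> sup (inf x y) (inf x z)"
    using himp_residuation[of "sup y z" x "sup (inf x y) (inf x z)"] by (simp add: inf_commute)
next
  show "sup (inf x y) (inf x z) \<le> inf x (sup y z)"
    by (simp add: le_infI2)
qed

end

subclass (in heyting_algebra) distrib_lattice
proof
  fix x y z :: 'a
  have "inf (sup x y) (sup x z) = sup (inf (sup x y) x) (inf (sup x y) z)"
    by (rule inf_sup_distrib_h)
  also have "\<dots> = sup x (inf z (sup x y))" by (simp add: inf_commute inf_absorb2)
  also have "\<dots> = sup x (sup (inf z x) (inf z y))" by (simp add: inf_sup_distrib_h)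
  also have "\<dots> = sup x (inf y z)"
    by (metis inf_commute inf_le2 sup_absorb1 sup_assoc sup_commute)
  finally show "sup x (inf y z) = inf (sup x y) (sup x z)" by simp
qed

lemma eq_by_le:
  fixes a b :: "'a::order"
  assumes "\<And>x. x \<le> a \<longleftrightarrow> x \<le> b"
  shows "a = b"
  using assms by (metis order.antisym order.refl)

lemma mp_h: "inf (himp a b) a \<le> (b::'a::heyting_algebra)"
  using himp_residuation[of "himp a b" a b] by simp

lemma himp_top_iff: "himp a b = top \<longleftrightarrow> (a::'a::heyting_algebra) \<le> b"
  using himp_residuation[of top a b] by (simp add: top_unique)

lemma himp_top_left: "himp top b = (b::'a::heyting_algebra)"
  by (rule eq_by_le) (simp add: himp_residuation[symmetric])

lemma himp_top_right: "himp a top = (top::'a::heyting_algebra)"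
  by (simp add: himp_top_iff)

lemma himp_self: "himp a a = (top::'a::heyting_algebra)"
  by (simp add: himp_top_iff)

lemma himp_curry: "himp a (himp b c) = himp (inf a b) (c::'a::heyting_algebra)"
  by (rule eq_by_le) (simp add: himp_residuation[symmetric] inf_assoc)

lemma himp_inf_right: "himp a (inf b c) = inf (himp a b) (himp a (c::'a::heyting_algebra))"
  by (rule eq_by_le) (simp add: himp_residuation[symmetric])

definition cj :: "'a::heyting_algebra list \<Rightarrow> 'a" where
  "cj L = foldr inf L top"

lemma cj_Nil[simp]: "cj [] = top" by (simp add: cj_def)
lemma cj_Cons[simp]: "cj (a # L) = inf a (cj L)" by (simp add: cj_def)
lemma cj_append[simp]: "cj (A @ B) = inf (cj A) (cj B)"
  by (induction A) (simp_all add: inf_assoc)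

lemma eval_imps: "eval w (imps \<Gamma> \<phi>) = himp (cj (map (eval w) \<Gamma>)) (eval w \<phi>)"
  by (induction \<Gamma>) (simp_all add: imps_def himp_top_left himp_curry)

lemma cj_himp_map: "cj (map (\<lambda>x. himp a (f x)) L) = himp a (cj (map f L))"
  by (induction L) (simp_all add: himp_top_right himp_inf_right)

lemma cj_or_map: "cj (map (\<lambda>d. sup c (f d)) B) = sup c (cj (map f B))"
  by (induction B) (simp_all add: sup_inf_distrib1)

lemma cj_or_prod:
  "cj (map (eval w) [FOr c d. c \<leftarrow> A, d \<leftarrow> B]) =
   sup (cj (map (eval w) A)) (cj (map (eval w) B))"
proof (induction A)
  case Nil then show ?case by simp
next
  case (Cons c A)
  have "cj (map (eval w) (map (FOr c) B)) = sup (eval w c) (cj (map (eval w) B))"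
    using cj_or_map[of "eval w c" "eval w" B] by (simp add: o_def)
  then show ?case using Cons by (simp add: sup_inf_distrib2)
qed

lemma eval_bold:
  "cj (map (eval w) (bold k \<phi>)) = eval (\<lambda>m. cj (map (\<lambda>j. w (m,j)) [1..<Suc k])) \<phi>"
proof (induction \<phi>)
  case (Var x) then show ?case by (simp add: o_def)
next
  case (FAnd a b) then show ?case by simp
next
  case (FOr a b) then show ?case by (simp add: cj_or_prod)
next
  case (FImp a b) then show ?case
    by (simp add: eval_imps o_def cj_himp_map[of _ "eval w", simplified])
next
  case (FNot a) then show ?case by (simp add: eval_imps)
next
  case FBot then show ?case
    using mp_h[of "w (1,1)" bot] by (simp add: inf_commute bot_unique)
next
  case FTop then show ?case by (simp add: himp_self)
qed

lemma eval_map_form: "eval w (map_form f \<phi>) = eval (w \<circ> f) \<phi>"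
  by (induction \<phi>) simp_all

lemma eval_cong: "(\<And>x. x \<in> vars \<phi> \<Longrightarrow> v x = v' x) \<Longrightarrow> eval v \<phi> = eval v' \<phi>"
  by (induction \<phi>) auto

theorem proposition9p5:
  fixes \<phi>s :: "nat form list" and y z :: nat
  assumes "sahlqvist_quasiequation \<phi>s y z"
  shows "quasi_valid_in TYPE('a::heyting_algebra) \<phi>s y z \<longleftrightarrow>
         (\<forall>\<psi>\<in>A_set \<phi>s. valid_in TYPE('a) \<psi>)"
proof -
  from assms have yz: "y \<noteq> z" and nv: "\<And>\<phi>. \<phi> \<in> set \<phi>s \<Longrightarrow> y \<notin> vars \<phi> \<and> z \<notin> vars \<phi>"
    by (auto simp: sahlqvist_quasiequation_def)
  define B where "B = (\<lambda>(w::(nat \<times> nat) option \<Rightarrow> 'a) k \<phi>.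
     eval (\<lambda>m. cj (map (\<lambda>j. w (Some (m,j))) [1..<Suc k])) \<phi>)"
  have evA: "eval w (imps (map (\<lambda>\<phi>. imps (map (map_form Some) (bold k \<phi>)) (Var None)) \<phi>s) (Var None))
      = himp (cj (map (\<lambda>\<phi>. himp (B w k \<phi>) (w None)) \<phi>s)) (w None)" for w k
  proof -
    have "\<And>\<phi>. cj (map (eval w) (map (map_form Some) (bold k \<phi>))) = B w k \<phi>"
      by (simp add: B_def o_def eval_map_form eval_bold[of "w \<circ> Some", simplified o_def])
    then show ?thesis by (simp add: eval_imps o_def)
  qed
  show ?thesis
  proof
    assume q: "quasi_valid_in TYPE('a) \<phi>s y z"
    show "\<forall>\<psi>\<in>A_set \<phi>s. valid_in TYPE('a) \<psi>"
    proof (clarsimp simp: A_set_def valid_in_def evA)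
      fix k :: nat and w :: "(nat \<times> nat) option \<Rightarrow> 'a"
      define c where "c = cj (map (\<lambda>\<phi>. himp (B w k \<phi>) (w None)) \<phi>s)"
      define v where "v = (\<lambda>m. cj (map (\<lambda>j. w (Some (m,j))) [1..<Suc k]))"
      define v' where "v' = v(y := c, z := w None)"
      have cle: "c \<le> himp (B w k \<phi>) (w None)" if "\<phi> \<in> set \<phi>s" for \<phi>
        using that unfolding c_def
        by (induction \<phi>s) (auto intro: le_infI1 le_infI2)
      have "\<forall>\<phi>\<in>set \<phi>s. inf (eval v' \<phi>) (v' y) \<le> v' z"
      proof
        fix \<phi> assume p: "\<phi> \<in> set \<phi>s"
        have "eval v' \<phi> = eval v \<phi>" using nv[OF p] by (intro eval_cong) (auto simp: v'_def)
        also have "\<dots> = B w k \<phi>" by (simp add: B_def v_def)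
        finally show "inf (eval v' \<phi>) (v' y) \<le> v' z"
          using cle[OF p] yz himp_residuation[of c "B w k \<phi>" "w None"]
          by (simp add: v'_def inf_commute)
      qed
      with q have "v' y \<le> v' z" by (simp add: quasi_valid_in_def)
      then have "c \<le> w None" using yz by (simp add: v'_def)
      then show "himp c (w None) = top" by (simp add: himp_top_iff)
    qed
  next
    assume a: "\<forall>\<psi>\<in>A_set \<phi>s. valid_in TYPE('a) \<psi>"
    show "quasi_valid_in TYPE('a) \<phi>s y z"
    unfolding quasi_valid_in_def
    proof (intro allI impI)
      fix v :: "nat \<Rightarrow> 'a"
      assume h: "\<forall>\<phi>\<in>set \<phi>s. inf (eval v \<phi>) (v y) \<le> v z"
      define w :: "(nat \<times> nat) option \<Rightarrow> 'a" where "w = (\<lambda>oo. case oo of None \<Rightarrow> himp (v y) (v z) | Some (m, j) \<Rightarrow> v m)"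
      have "imps (map (\<lambda>\<phi>. imps (map (map_form Some) (bold 1 \<phi>)) (Var None)) \<phi>s) (Var None) \<in> A_set \<phi>s"
        unfolding A_set_def by blast
      with a have "eval w (imps (map (\<lambda>\<phi>. imps (map (map_form Some) (bold 1 \<phi>)) (Var None)) \<phi>s) (Var None)) = top"
        by (auto simp: valid_in_def)
      then have e: "himp (cj (map (\<lambda>\<phi>. himp (B w 1 \<phi>) (w None)) \<phi>s)) (w None) = top"
        by (simp add: evA)
      have Bw: "B w 1 \<phi> = eval v \<phi>" for \<phi>
        by (simp add: B_def w_def)
      have "\<forall>\<phi>\<in>set \<phi>s. himp (B w 1 \<phi>) (w None) = top"
      proof
        fix \<phi> assume "\<phi> \<in> set \<phi>s"
        with h have "inf (eval v \<phi>) (v y) \<le> v z" by blast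
        then have "eval v \<phi> \<le> himp (v y) (v z)" by (simp add: himp_residuation)
        then show "himp (B w 1 \<phi>) (w None) = top"
          unfolding Bw by (simp add: himp_top_iff w_def)
      qed
      then have "cj (map (\<lambda>\<phi>. himp (B w 1 \<phi>) (w None)) \<phi>s) = top"
        by (induction \<phi>s) auto
      with e have "w None = top" by (simp add: himp_top_left)
      then show "v y \<le> v z" by (simp add: w_def himp_top_iff)
    qed
  qed
qed

end
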